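(* Let $n,T\ge1$, $\beta^1,\beta^2\in(0,1)$, and let $\mathcal{V}$ denote the set of all finite products $U_r\cdots U_1$ ($r\ge1$) of matrices $U_s\in\mathcal{S}$. Then: (i) $W$ is invariant under every $H\in\mathcal{V}$; (ii) $\|H\mathbf{z}\|\le\|\mathbf{z}\|$ for all $H\in\mathcal{V}$ and $\mathbf{z}\in W$; (iii) if $Y=U_r\cdots U_1\in\mathcal{V}$ is a product in which at least one factor equals $\begin{bmatrix}E^1&0\\0&I\end{bmatrix}$ and at least one factor equals $\begin{bmatrix}I&0\\0&E^2\end{bmatrix}$, then $\|Y\mathbf{z}\|<\|\mathbf{z}\|$ for every non-zero $\mathbf{z}\in W$.
   Context: $\mathbf{e}\in\mathbb{R}^n$ is the all-ones vector. For $j=1,2$ and $b\in\{\beta^j,1\}^n$, $A_b=\operatorname{diag}(b)+\frac1n\mathbf{e}(\mathbf{e}-b)^\top$; $\mathcal{F}^j=\{A_b:b\in\{\beta^j,1\}^n\}$; $B^j=\beta^jI+\frac{1-\beta^j}{n}\mathbf{e}\mathbf{e}^\top$. For $A\in\mathcal{F}^j$, $D(A)\in\mathbb{R}^{Tn\times Tn}$ is the $T\times T$ block matrix with: block row 1 equal to $(A,0,\dots,0)$; block row 2 (if $T\ge2$) equal to $(\tfrac12(A+I),0,\dots,0)$; for $3\le\ell\le T$, block row $\ell$ has $\tfrac1\ell A$ in block column 1, $\tfrac{\ell-1}{\ell}I$ in block column $\ell-1$, zeros elsewhere. $\mathcal{Q}^j=\{D(A):A\in\mathcal{F}^j\}$,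 $E^j=D(B^j)$. $\mathcal{S}$ is the set of all $2Tn\times2Tn$ matrices $\begin{bmatrix}D^1&0\\0&I\end{bmatrix}$ ($D^1\in\mathcal{Q}^1$) and $\begin{bmatrix}I&0\\0&D^2\end{bmatrix}$ ($D^2\in\mathcal{Q}^2$). For $\mathbf{z}^j=((\mathbf{z}^j_1)^\top,\dots,(\mathbf{z}^j_T)^\top)^\top\in\mathbb{R}^{Tn}$, $\|\mathbf{z}^j\|_T=\max_t\|\mathbf{z}^j_t\|_1$, and for $\mathbf{z}=(\mathbf{z}^1,\mathbf{z}^2)$, $\|\mathbf{z}\|=\max\{\|\mathbf{z}^1\|_T,\|\mathbf{z}^2\|_T\}$. $W=\{(\mathbf{z}^1,\mathbf{z}^2):\mathbf{e}^\top\mathbf{z}^1_t=\mathbf{e}^\top\mathbf{z}^2_t=0,\ t=1,\dots,T\}$. *)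

theory Defs
  imports "Jordan_Normal_Form.Matrix"
begin

text \<open>Matrix A_b = diag(b) + (1/n) e (e - b)^T, with b given by its entries b 0, ..., b (n-1).\<close>
definition Amat :: "nat \<Rightarrow> (nat \<Rightarrow> real) \<Rightarrow> real mat" where
  "Amat n b = mat n n (\<lambda>(i,j). (if i = j then b j else 0) + (1 - b j) / real n)"

definition Fam :: "nat \<Rightarrow> real \<Rightarrow> real mat set" where
  "Fam n \<beta> = {Amat n b | b. \<forall>i<n. b i \<in> {\<beta>, 1}}"

definition Bmat :: "nat \<Rightarrow> real \<Rightarrow> real mat" where
  "Bmat n \<beta> = mat n n (\<lambda>(i,j). (if i = j then \<beta> else 0) + (1 - \<beta>) / real n)"

text \<open>Block (l,k) (0-based, so block row l corresponds to the paper's row l+1) of D(A).\<close>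
definition Dblock :: "nat \<Rightarrow> real mat \<Rightarrow> nat \<Rightarrow> nat \<Rightarrow> real mat" where
  "Dblock n A l k =
     (if l = 0 then (if k = 0 then A else 0\<^sub>m n n)
      else if l = 1 then (if k = 0 then (1/2) \<cdot>\<^sub>m (A + 1\<^sub>m n) else 0\<^sub>m n n)
      else if k = 0 then (1 / real (l+1)) \<cdot>\<^sub>m A
      else if k = l - 1 then (real l / real (l+1)) \<cdot>\<^sub>m 1\<^sub>m n
      else 0\<^sub>m n n)"

definition Dmat :: "nat \<Rightarrow> nat \<Rightarrow> real mat \<Rightarrow> real mat" where
  "Dmat T n A = mat (T*n) (T*n)
     (\<lambda>(r,c). Dblock n A (r div n) (c div n) $$ (r mod n, c mod n))"

definition Emat :: "nat \<Rightarrow> nat \<Rightarrow> real \<Rightarrow> real mat" where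
  "Emat T n \<beta> = Dmat T n (Bmat n \<beta>)"

definition blk1 :: "nat \<Rightarrow> nat \<Rightarrow> real mat \<Rightarrow> real mat" where
  "blk1 T n D = four_block_mat D (0\<^sub>m (T*n) (T*n)) (0\<^sub>m (T*n) (T*n)) (1\<^sub>m (T*n))"

definition blk2 :: "nat \<Rightarrow> nat \<Rightarrow> real mat \<Rightarrow> real mat" where
  "blk2 T n D = four_block_mat (1\<^sub>m (T*n)) (0\<^sub>m (T*n) (T*n)) (0\<^sub>m (T*n) (T*n)) D"

definition Sset :: "nat \<Rightarrow> nat \<Rightarrow> real \<Rightarrow> real \<Rightarrow> real mat set" where
  "Sset T n \<beta>1 \<beta>2 = {blk1 T n (Dmat T n A) | A. A \<in> Fam n \<beta>1}
                   \<union> {blk2 T n (Dmat T n A) | A. A \<in> Fam n \<beta>2}"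

text \<open>Product U_r ... U_1 of the list [U_1, ..., U_r] (N x N identity for the empty list).\<close>
definition lprod :: "nat \<Rightarrow> real mat list \<Rightarrow> real mat" where
  "lprod N Us = fold (\<lambda>U acc. U * acc) Us (1\<^sub>m N)"

definition Vset :: "nat \<Rightarrow> nat \<Rightarrow> real \<Rightarrow> real \<Rightarrow> real mat set" where
  "Vset T n \<beta>1 \<beta>2 = {lprod (2*T*n) Us | Us. Us \<noteq> [] \<and> set Us \<subseteq> Sset T n \<beta>1 \<beta>2}"

text \<open>Vector z in R^{2Tn}: z^1_t (t = 0..T-1) occupies indices t*n + i, z^2_t occupies T*n + t*n + i.\<close>
definition blocknorm :: "nat \<Rightarrow> nat \<Rightarrow> nat \<Rightarrow> real vec \<Rightarrow> real" where
  "blocknorm T n off z = Max {(\<Sum>i<n. \<bar>z $ (off + t*n + i)\<bar>) | t. t < T}"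

definition znorm :: "nat \<Rightarrow> nat \<Rightarrow> real vec \<Rightarrow> real" where
  "znorm T n z = max (blocknorm T n 0 z) (blocknorm T n (T*n) z)"

definition Wset :: "nat \<Rightarrow> nat \<Rightarrow> real vec set" where
  "Wset T n = {z \<in> carrier_vec (2*T*n).
      \<forall>t<T. (\<Sum>i<n. z $ (t*n + i)) = 0 \<and> (\<Sum>i<n. z $ (T*n + t*n + i)) = 0}"

end

theory Submission
  imports Defs
begin

lemma sum_lessThan_add_split: "(\<Sum>c<a+b. f c) = ((\<Sum>c<a. f c) + (\<Sum>j<b. f (a+j::nat)) :: real)"
  by (induction b) (auto simp: add.commute add.left_commute)

lemma sum_blocks: "(\<Sum>c<T*n. f c::real) = ((\<Sum>k<T. \<Sum>j<n. f (k*n+j::nat)) :: real)"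
proof (induction T)
  case (Suc T)
  have "(\<Sum>c<Suc T*n. f c) = (\<Sum>c<T*n + n. f c)" by (simp add: add.commute)
  also have "\<dots> = (\<Sum>c<T*n. f c) + (\<Sum>j<n. f (T*n+j))" by (rule sum_lessThan_add_split)
  finally show ?case using Suc by simp
qed simp

definition Af :: "nat \<Rightarrow> (nat \<Rightarrow> real) \<Rightarrow> (nat \<Rightarrow> real) \<Rightarrow> nat \<Rightarrow> real" where
  "Af n b f i = b i * f i + (\<Sum>j<n. (1 - b j) * f j) / real n"

definition Dout :: "nat \<Rightarrow> (nat \<Rightarrow> real) \<Rightarrow> (nat \<Rightarrow> real) \<Rightarrow> nat \<Rightarrow> nat \<Rightarrow> real" where
  "Dout n b y l i = (if l = 0 then Af n b y i else if l = 1 then (Af n b y i + y i) / 2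
     else Af n b y i / real (l+1) + real l / real (l+1) * y ((l-1)*n + i))"

lemma sum_single: assumes "a < (T::nat)" "\<And>k. k<T \<Longrightarrow> k \<noteq> a \<Longrightarrow> G k = (0::real)"
  shows "(\<Sum>k<T. G k) = G a"
proof -
  have "(\<Sum>k<T. G k) = G a + (\<Sum>k\<in>{..<T}-{a}. G k)" using assms(1) by (simp add: sum.remove)
  also have "(\<Sum>k\<in>{..<T}-{a}. G k) = 0" using assms(2) by (intro sum.neutral) auto
  finally show ?thesis by simp
qed

lemma sum_two: assumes "a < (T::nat)" "c < T" "a \<noteq> c" "\<And>k. k<T \<Longrightarrow> k \<noteq> a \<Longrightarrow> k \<noteq> c \<Longrightarrow> G k = (0::real)"
  shows "(\<Sum>k<T. G k) = G a + G c"
proof -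
  have "(\<Sum>k<T. G k) = G a + (\<Sum>k\<in>{..<T}-{a}. G k)" using assms(1) by (simp add: sum.remove)
  also have "(\<Sum>k\<in>{..<T}-{a}. G k) = G c + (\<Sum>k\<in>{..<T}-{a}-{c}. G k)" using assms by (subst sum.remove[of _ c]) auto
  also have "(\<Sum>k\<in>{..<T}-{a}-{c}. G k) = 0" using assms(4) by (intro sum.neutral) auto
  finally show ?thesis by simp
qed

lemma Amat_carrier: "Amat n b \<in> carrier_mat n n" by (simp add: Amat_def)

lemma Amat_row: assumes "i < n"
  shows "(\<Sum>j<n. Amat n b $$ (i,j) * f j) = Af n b f i"
proof -
  have "(\<Sum>j<n. Amat n b $$ (i,j) * f j) = (\<Sum>j<n. (if i = j then b j * f j else 0) + (1 - b j) * f j / real n)"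
    using assms by (intro sum.cong) (auto simp: Amat_def algebra_simps)
  also have "\<dots> = b i * f i + (\<Sum>j<n. (1 - b j) * f j) / real n"
    using assms by (simp add: sum.distrib sum_divide_distrib)
  finally show ?thesis by (simp add: Af_def)
qed

lemma Dmat_apply:
  assumes y: "y \<in> carrier_vec (T*n)" and r: "r < T*n"
  shows "(Dmat T n (Amat n b) *\<^sub>v y) $ r = Dout n b (\<lambda>j. y $ j) (r div n) (r mod n)"
proof -
  define l where "l = r div n"
  define i where "i = r mod n"
  have n: "0 < n" using r by (cases n) auto
  have i: "i < n" using n by (simp add: i_def)
  have l: "l < T" using r by (simp add: l_def less_mult_imp_div_less)
  have T: "0 < T" using l by simp
  have "(Dmat T n (Amat n b) *\<^sub>v y) $ r = (\<Sum>c<T*n. Dblock n (Amat n b) l (c div n) $$ (i, c mod n) * y $ c)"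
    using y r by (simp add: Dmat_def scalar_prod_def l_def i_def lessThan_atLeast0)
  also have "\<dots> = (\<Sum>k<T. \<Sum>j<n. Dblock n (Amat n b) l k $$ (i, j) * y $ (k*n+j))"
    using n by (simp add: sum_blocks)
  also have "\<dots> = Dout n b (\<lambda>j. y $ j) l i"
  proof -
    let ?F = "\<lambda>k j. Dblock n (Amat n b) l k $$ (i, j) * y $ (k*n+j)"
    have Z: "\<And>k j. j < n \<Longrightarrow> k \<noteq> 0 \<Longrightarrow> (l = 0 \<or> l = 1 \<or> k \<noteq> l - 1) \<Longrightarrow> ?F k j = 0"
      using i by (auto simp: Dblock_def)
    show ?thesis
    proof (cases "l = 0 \<or> l = 1")
      case True
      have "(\<Sum>k<T. \<Sum>j<n. ?F k j) = (\<Sum>j<n. ?F 0 j)"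
        using T Z True by (intro sum_single) (auto intro!: sum.neutral)
      also have "\<dots> = Dout n b (\<lambda>j. y $ j) l i"
      proof (cases "l = 0")
        case True
        then show ?thesis using Amat_row[OF i, of b "\<lambda>j. y $ j"] by (simp add: Dblock_def Dout_def)
      next
        case False
        then have l1: "l = 1" using \<open>l = 0 \<or> l = 1\<close> by simp
        have "(\<Sum>j<n. ?F 0 j) = (\<Sum>j<n. (Amat n b $$ (i,j) * y $ j + (if i = j then y $ j else 0)) / 2)"
          using i l1 Amat_carrier[of n b] by (intro sum.cong) (auto simp: Dblock_def algebra_simps)
        also have "\<dots> = (Af n b (\<lambda>j. y $ j) i + y $ i) / 2"
          using i Amat_row[OF i, of b "\<lambda>j. y $ j"] by (simp add: sum.distrib sum_divide_distrib[symmetric])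
        finally show ?thesis using l1 by (simp add: Dout_def)
      qed
      finally show ?thesis .
    next
      case False
      have "(\<Sum>k<T. \<Sum>j<n. ?F k j) = (\<Sum>j<n. ?F 0 j) + (\<Sum>j<n. ?F (l-1) j)"
        using T Z False l by (intro sum_two) (auto intro!: sum.neutral)
      also have "\<dots> = Dout n b (\<lambda>j. y $ j) l i"
      proof -
        have "(\<Sum>j<n. ?F 0 j) = (\<Sum>j<n. Amat n b $$ (i,j) * y $ j / real (l+1))"
          using i False Amat_carrier[of n b] by (intro sum.cong) (auto simp: Dblock_def)
        also have "\<dots> = Af n b (\<lambda>j. y $ j) i / real (l+1)"
          using Amat_row[OF i, of b "\<lambda>j. y $ j"] by (simp add: sum_divide_distrib[symmetric])
        finally have 1: "(\<Sum>j<n. ?F 0 j) = Af n b (\<lambda>j. y $ j) i / real (l+1)" .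
        have "(\<Sum>j<n. ?F (l-1) j) = (\<Sum>j<n. if i = j then real l / real (l+1) * y $ ((l-1)*n+j) else 0)"
          using i False by (intro sum.cong) (auto simp: Dblock_def)
        also have "\<dots> = real l / real (l+1) * y $ ((l-1)*n+i)" using i by simp
        finally show ?thesis using 1 False by (simp add: Dout_def)
      qed
      finally show ?thesis .
    qed
  qed
  finally show ?thesis by (simp add: l_def i_def)
qed

lemma Dmat_carrier: "Dmat T n A \<in> carrier_mat (T*n) (T*n)" by (simp add: Dmat_def)

lemma blk1_carrier: assumes "D \<in> carrier_mat (T*n) (T*n)" shows "blk1 T n D \<in> carrier_mat (2*T*n) (2*T*n)"
proof -
  have e: "2*T*n = T*n + T*n" by simp
  show ?thesis unfolding e blk1_def by (rule four_block_carrier_mat) (use assms in auto)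
qed
lemma blk2_carrier: assumes "D \<in> carrier_mat (T*n) (T*n)" shows "blk2 T n D \<in> carrier_mat (2*T*n) (2*T*n)"
proof -
  have e: "2*T*n = T*n + T*n" by simp
  show ?thesis unfolding e blk2_def by (rule four_block_carrier_mat) (use assms in auto)
qed

lemma blk1_idx: assumes D: "D \<in> carrier_mat (T*n) (T*n)" and "r < 2*T*n" "c < 2*T*n"
  shows "blk1 T n D $$ (r,c) = (if r < T*n then (if c < T*n then D $$ (r,c) else 0)
     else (if c < T*n then 0 else (if r = c then 1 else 0)))"
proof -
  have e: "2*T*n = T*n + T*n" by simp
  have dD: "dim_row D = T*n" "dim_col D = T*n" using D by auto
  show ?thesis unfolding blk1_def using assms(2,3) unfolding e
    by (subst index_mat_four_block(1)) (auto simp: dD)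
qed

lemma blk2_idx: assumes D: "D \<in> carrier_mat (T*n) (T*n)" and "r < 2*T*n" "c < 2*T*n"
  shows "blk2 T n D $$ (r,c) = (if r < T*n then (if c < T*n then (if r = c then 1 else 0) else 0)
     else (if c < T*n then 0 else D $$ (r - T*n, c - T*n)))"
proof -
  have e: "2*T*n = T*n + T*n" by simp
  have dD: "dim_row D = T*n" "dim_col D = T*n" using D by auto
  show ?thesis unfolding blk2_def using assms(2,3) unfolding e
    by (subst index_mat_four_block(1)) (simp_all add: dD)
qed

lemma blk1_apply:
  assumes D: "D \<in> carrier_mat (T*n) (T*n)" and z: "z \<in> carrier_vec (2*T*n)" and r: "r < 2*T*n"
  shows "(blk1 T n D *\<^sub>v z) $ r = (if r < T*n then (D *\<^sub>v vec (T*n) (\<lambda>j. z $ j)) $ r else z $ r)"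
proof -
  let ?N = "T*n"
  have e: "2*T*n = ?N + ?N" by simp
  have e: "2*T*n = ?N + ?N" by simp
  have dB: "dim_row (blk1 T n D) = 2*T*n" using blk1_carrier[OF D] by auto
  have dz: "dim_vec z = 2*T*n" using z by auto
  have "(blk1 T n D *\<^sub>v z) $ r = (\<Sum>c\<in>{0..<2*T*n}. blk1 T n D $$ (r,c) * z $ c)"
    using r blk1_carrier[OF D] dB unfolding scalar_prod_def dz
    by (subst index_mult_mat_vec) (auto intro!: sum.cong simp del: mult_2 simp add: dz scalar_prod_def)
  also have "\<dots> = (\<Sum>c<?N+?N. blk1 T n D $$ (r,c) * z $ c)" unfolding e lessThan_atLeast0 ..
  also have "\<dots> = (\<Sum>c<?N. blk1 T n D $$ (r,c) * z $ c) + (\<Sum>j<?N. blk1 T n D $$ (r,?N+j) * z $ (?N+j))"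
    by (rule sum_lessThan_add_split)
  also have "\<dots> = (if r < T*n then (D *\<^sub>v vec (T*n) (\<lambda>j. z $ j)) $ r else z $ r)"
  proof (cases "r < ?N")
    case True
    have "(\<Sum>j<?N. blk1 T n D $$ (r,?N+j) * z $ (?N+j)) = 0"
      using True D by (intro sum.neutral) (auto simp: blk1_idx)
    moreover have "(\<Sum>c<?N. blk1 T n D $$ (r,c) * z $ c) = (D *\<^sub>v vec (T*n) (\<lambda>j. z $ j)) $ r"
      using True D by (auto simp: blk1_idx scalar_prod_def lessThan_atLeast0 intro!: sum.cong)
    ultimately show ?thesis using True by simp
  next
    case False
    have "(\<Sum>c<?N. blk1 T n D $$ (r,c) * z $ c) = 0"
      using False D r by (intro sum.neutral) (auto simp: blk1_idx)
    moreover have "(\<Sum>j<?N. blk1 T n D $$ (r,?N+j) * z $ (?N+j)) = (\<Sum>j<?N. if j = r - ?N then z $ r else 0)"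
      using False D r by (intro sum.cong) (auto simp: blk1_idx)
    moreover have "\<dots> = z $ r" using False r by simp
    ultimately show ?thesis using False by simp
  qed
  finally show ?thesis .
qed

lemma blk2_apply:
  assumes D: "D \<in> carrier_mat (T*n) (T*n)" and z: "z \<in> carrier_vec (2*T*n)" and r: "r < 2*T*n"
  shows "(blk2 T n D *\<^sub>v z) $ r = (if r < T*n then z $ r else (D *\<^sub>v vec (T*n) (\<lambda>j. z $ (T*n+j))) $ (r - T*n))"
proof -
  let ?N = "T*n"
  have e: "2*T*n = ?N + ?N" by simp
  have dB: "dim_row (blk2 T n D) = 2*T*n" using blk2_carrier[OF D] by auto
  have dz: "dim_vec z = 2*T*n" using z by auto
  have "(blk2 T n D *\<^sub>v z) $ r = (\<Sum>c\<in>{0..<2*T*n}. blk2 T n D $$ (r,c) * z $ c)"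
    using r blk2_carrier[OF D] dB unfolding scalar_prod_def dz
    by (subst index_mult_mat_vec) (auto intro!: sum.cong simp del: mult_2 simp add: dz scalar_prod_def)
  also have "\<dots> = (\<Sum>c<?N+?N. blk2 T n D $$ (r,c) * z $ c)" unfolding e lessThan_atLeast0 ..
  also have "\<dots> = (\<Sum>c<?N. blk2 T n D $$ (r,c) * z $ c) + (\<Sum>j<?N. blk2 T n D $$ (r,?N+j) * z $ (?N+j))"
    by (rule sum_lessThan_add_split)
  also have "\<dots> = (if r < T*n then z $ r else (D *\<^sub>v vec (T*n) (\<lambda>j. z $ (T*n+j))) $ (r - T*n))"
  proof (cases "r < ?N")
    case True
    have "(\<Sum>j<?N. blk2 T n D $$ (r,?N+j) * z $ (?N+j)) = 0"
      using True D by (intro sum.neutral) (auto simp: blk2_idx)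
    moreover have "(\<Sum>c<?N. blk2 T n D $$ (r,c) * z $ c) = (\<Sum>c<?N. if c = r then z $ r else 0)"
      using True D by (intro sum.cong) (auto simp: blk2_idx)
    moreover have "\<dots> = z $ r" using True by simp
    ultimately show ?thesis using True by simp
  next
    case False
    have "(\<Sum>c<?N. blk2 T n D $$ (r,c) * z $ c) = 0"
      using False D r by (intro sum.neutral) (auto simp: blk2_idx)
    moreover have "(\<Sum>j<?N. blk2 T n D $$ (r,?N+j) * z $ (?N+j)) = (D *\<^sub>v vec (T*n) (\<lambda>j. z $ (T*n+j))) $ (r - T*n)"
      using False D r by (auto simp: blk2_idx scalar_prod_def lessThan_atLeast0 intro!: sum.cong)
    ultimately show ?thesis using False by simp
  qed
  finally show ?thesis .
qed

lemma Af_sum: assumes "0 < n" shows "(\<Sum>i<n. Af n b f i) = (\<Sum>i<n. f i)"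
proof -
  have "(\<Sum>i<n. Af n b f i) = (\<Sum>i<n. b i * f i) + real n * ((\<Sum>j<n. (1 - b j) * f j) / real n)"
    by (simp add: Af_def sum.distrib)
  also have "\<dots> = (\<Sum>i<n. b i * f i) + (\<Sum>j<n. (1 - b j) * f j)" using assms by simp
  also have "\<dots> = (\<Sum>i<n. f i)" by (simp add: sum.distrib[symmetric] algebra_simps)
  finally show ?thesis .
qed

lemma Af_abs: assumes "0 < n" "\<forall>i<n. 0 \<le> b i \<and> b i \<le> 1"
  shows "(\<Sum>i<n. \<bar>Af n b f i\<bar>) \<le> (\<Sum>i<n. \<bar>f i\<bar>)"
proof -
  have "\<And>i. i < n \<Longrightarrow> \<bar>Af n b f i\<bar> \<le> b i * \<bar>f i\<bar> + (\<Sum>j<n. (1 - b j) * \<bar>f j\<bar>) / real n"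
  proof -
    fix i assume i: "i < n"
    have "\<bar>Af n b f i\<bar> \<le> \<bar>b i * f i\<bar> + \<bar>(\<Sum>j<n. (1 - b j) * f j) / real n\<bar>"
      unfolding Af_def by (rule abs_triangle_ineq)
    also have "\<bar>b i * f i\<bar> = b i * \<bar>f i\<bar>" using assms(2) i by (simp add: abs_mult)
    also have "\<bar>(\<Sum>j<n. (1 - b j) * f j) / real n\<bar> = \<bar>\<Sum>j<n. (1 - b j) * f j\<bar> / real n" by simp
    also have "\<bar>\<Sum>j<n. (1 - b j) * f j\<bar> \<le> (\<Sum>j<n. \<bar>(1 - b j) * f j\<bar>)" by (rule sum_abs)
    also have "(\<Sum>j<n. \<bar>(1 - b j) * f j\<bar>) = (\<Sum>j<n. (1 - b j) * \<bar>f j\<bar>)"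
      using assms(2) by (intro sum.cong) (auto simp: abs_mult)
    finally show "\<bar>Af n b f i\<bar> \<le> b i * \<bar>f i\<bar> + (\<Sum>j<n. (1 - b j) * \<bar>f j\<bar>) / real n"
      using assms(1) by (simp add: divide_right_mono)
  qed
  then have "(\<Sum>i<n. \<bar>Af n b f i\<bar>) \<le> (\<Sum>i<n. b i * \<bar>f i\<bar> + (\<Sum>j<n. (1 - b j) * \<bar>f j\<bar>) / real n)"
    by (intro sum_mono) auto
  also have "\<dots> = (\<Sum>i<n. b i * \<bar>f i\<bar>) + (\<Sum>j<n. (1 - b j) * \<bar>f j\<bar>)"
    using assms(1) by (simp add: sum.distrib)
  also have "\<dots> = (\<Sum>i<n. \<bar>f i\<bar>)" by (simp add: sum.distrib[symmetric] algebra_simps)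
  finally show ?thesis .
qed

lemma Af_const: assumes "(\<Sum>j<n. f j) = 0" shows "Af n (\<lambda>_. \<beta>) f i = \<beta> * f i"
proof -
  have "(\<Sum>j<n. (1 - \<beta>) * f j) = (1 - \<beta>) * (\<Sum>j<n. f j)" by (simp add: sum_distrib_left)
  then show ?thesis using assms by (simp add: Af_def)
qed

lemma Dout_sum:
  assumes n: "0 < n" and l: "l < T" and S: "\<forall>t<T. (\<Sum>i<n. y (t*n+i)) = 0"
  shows "(\<Sum>i<n. Dout n b y l i) = 0"
proof -
  have T: "0 < T" using l by simp
  have "(\<Sum>i<n. y (0*n+i)) = 0" using S T by blast
  then have S0: "(\<Sum>i<n. Af n b y i) = 0" using Af_sum[OF n, of b y] by simp
  show ?thesis
  proof (cases "l = 0 \<or> l = 1")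
    case True
    have S0': "(\<Sum>i<n. y i) = 0" using Af_sum[OF n, of b y] S0 by simp
    show ?thesis using True S0 S0' by (auto simp: Dout_def sum.distrib sum_divide_distrib[symmetric])
  next
    case False
    have S1: "(\<Sum>i<n. y ((l-1)*n+i)) = 0" using S l by simp
    have "(\<Sum>i<n. Dout n b y l i) = (\<Sum>i<n. Af n b y i) / real (l+1) + real l / real (l+1) * (\<Sum>i<n. y ((l-1)*n+i))"
      using False by (simp add: Dout_def sum.distrib sum_divide_distrib[symmetric] sum_distrib_left)
    then show ?thesis using S0 S1 by simp
  qed
qed

lemma Dout_norm:
  assumes l: "l < T" and N: "\<forall>t<T. (\<Sum>i<n. \<bar>y (t*n+i)\<bar>) \<le> M"
    and a: "(\<Sum>i<n. \<bar>Af n b y i\<bar>) \<le> a" and aM: "a \<le> M"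
  shows "(\<Sum>i<n. \<bar>Dout n b y l i\<bar>) \<le> M" and "a < M \<Longrightarrow> (\<Sum>i<n. \<bar>Dout n b y l i\<bar>) < M"
proof -
  have T: "0 < T" using l by simp
  have "(\<Sum>i<n. \<bar>y (0*n+i)\<bar>) \<le> M" using N T by blast
  then have N0: "(\<Sum>i<n. \<bar>y i\<bar>) \<le> M" by simp
  have "(\<Sum>i<n. \<bar>Dout n b y l i\<bar>) \<le> M \<and> (a < M \<longrightarrow> (\<Sum>i<n. \<bar>Dout n b y l i\<bar>) < M)"
  proof (cases "l = 0")
    case True
    then show ?thesis using a aM by (simp add: Dout_def)
  next
    case l0: False
    show ?thesis
    proof (cases "l = 1")
      case True
      have "(\<Sum>i<n. \<bar>Dout n b y l i\<bar>) \<le> (\<Sum>i<n. (\<bar>Af n b y i\<bar> + \<bar>y i\<bar>) / 2)"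
        using True by (intro sum_mono) (simp add: Dout_def abs_triangle_ineq divide_right_mono)
      also have "\<dots> = ((\<Sum>i<n. \<bar>Af n b y i\<bar>) + (\<Sum>i<n. \<bar>y i\<bar>)) / 2"
        by (simp add: sum.distrib sum_divide_distrib[symmetric])
      finally have X: "(\<Sum>i<n. \<bar>Dout n b y l i\<bar>) \<le> ((\<Sum>i<n. \<bar>Af n b y i\<bar>) + (\<Sum>i<n. \<bar>y i\<bar>)) / 2" .
      have X2: "2 * (\<Sum>i<n. \<bar>Dout n b y l i\<bar>) \<le> (\<Sum>i<n. \<bar>Af n b y i\<bar>) + (\<Sum>i<n. \<bar>y i\<bar>)" using X by simp
      show ?thesis by (intro conjI impI) (use X2 a aM N0 in linarith)+
    next
      case False
      have Nl: "(\<Sum>i<n. \<bar>y ((l-1)*n+i)\<bar>) \<le> M" using N l by simp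
      have "(\<Sum>i<n. \<bar>Dout n b y l i\<bar>) \<le> (\<Sum>i<n. \<bar>Af n b y i\<bar> / real (l+1) + real l / real (l+1) * \<bar>y ((l-1)*n+i)\<bar>)"
        using False l0 by (intro sum_mono) (simp add: Dout_def abs_triangle_ineq[THEN order_trans] abs_mult)
      also have "\<dots> = (\<Sum>i<n. \<bar>Af n b y i\<bar>) / real (l+1) + real l / real (l+1) * (\<Sum>i<n. \<bar>y ((l-1)*n+i)\<bar>)"
        by (simp add: sum.distrib sum_divide_distrib[symmetric] sum_distrib_left)
      also have "\<dots> = ((\<Sum>i<n. \<bar>Af n b y i\<bar>) + real l * (\<Sum>i<n. \<bar>y ((l-1)*n+i)\<bar>)) / real (l+1)"
        by (simp add: add_divide_distrib)
      finally have 1: "(\<Sum>i<n. \<bar>Dout n b y l i\<bar>) \<le> ((\<Sum>i<n. \<bar>Af n b y i\<bar>) + real l * (\<Sum>i<n. \<bar>y ((l-1)*n+i)\<bar>)) / real (l+1)" .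
      have 2: "real l * (\<Sum>i<n. \<bar>y ((l-1)*n+i)\<bar>) \<le> real l * M" using Nl by (simp add: mult_left_mono)
      have 3: "(a + real l * M) / real (l+1) \<le> M" using aM by (simp add: field_simps)
      have 4: "a < M \<Longrightarrow> (a + real l * M) / real (l+1) < M" by (simp add: field_simps)
      have 5: "((\<Sum>i<n. \<bar>Af n b y i\<bar>) + real l * (\<Sum>i<n. \<bar>y ((l-1)*n+i)\<bar>)) / real (l+1) \<le> (a + real l * M) / real (l+1)"
        using a 2 by (intro divide_right_mono) auto
      show ?thesis by (intro conjI impI) (use 1 3 4 5 in linarith)+
    qed
  qed
  then show "(\<Sum>i<n. \<bar>Dout n b y l i\<bar>) \<le> M" and "a < M \<Longrightarrow> (\<Sum>i<n. \<bar>Dout n b y l i\<bar>) < M" by auto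
qed

lemma blocknorm_eq: "blocknorm T n off z = Max ((\<lambda>t. \<Sum>i<n. \<bar>z $ (off + (t*n+i))\<bar>) ` {..<T})"
  unfolding blocknorm_def by (rule arg_cong[where f=Max]) (auto simp: add.assoc)

lemma blocknorm_ge: "t < T \<Longrightarrow> (\<Sum>i<n. \<bar>z $ (off + (t*n+i))\<bar>) \<le> blocknorm T n off z"
  unfolding blocknorm_eq by (rule Max_ge) auto

lemma blocknorm_le_iff: "0 < T \<Longrightarrow> blocknorm T n off z \<le> M \<longleftrightarrow> (\<forall>t<T. (\<Sum>i<n. \<bar>z $ (off + (t*n+i))\<bar>) \<le> M)"
  unfolding blocknorm_eq by (subst Max_le_iff) auto

lemma blocknorm_less_iff: "0 < T \<Longrightarrow> blocknorm T n off z < M \<longleftrightarrow> (\<forall>t<T. (\<Sum>i<n. \<bar>z $ (off + (t*n+i))\<bar>) < M)"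
  unfolding blocknorm_eq by (subst Max_less_iff) auto

lemma blocknorm_nonneg: "0 < T \<Longrightarrow> 0 \<le> blocknorm T n off z"
  using blocknorm_ge[where t=0 and T=T and n=n and z=z and off=off] by (meson order_trans sum_nonneg abs_ge_zero)

lemma Af_cong2: "(\<forall>j<n. b j = b' j \<and> f j = f' j) \<Longrightarrow> i < n \<Longrightarrow> Af n b f i = Af n b' f' i"
  unfolding Af_def by (auto intro!: sum.cong)

lemma idx_lt: "t < (T::nat) \<Longrightarrow> i < n \<Longrightarrow> t*n + i < T*n"
proof -
  assume "t < T" "i < n"
  then have "t*n + i < t*n + n" by simp
  also have "\<dots> = Suc t * n" by simp
  also have "\<dots> \<le> T*n" using \<open>t < T\<close> by (intro mult_le_mono1) simp
  finally show ?thesis .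
qed

lemma Dout_cong: assumes "\<forall>j<T*n. y j = y' j" "t < T" "i < n"
  shows "Dout n b y t i = Dout n b y' t i"
proof -
  have lt: "\<And>j. j < n \<Longrightarrow> j < T*n" using idx_lt[of 0 T] assms(2) by auto
  have A: "Af n b y i = Af n b y' i" using assms(1,3) lt by (intro Af_cong2) auto
  have "t \<ge> 2 \<Longrightarrow> y ((t-1)*n+i) = y' ((t-1)*n+i)" using assms idx_lt[of "t-1" T i n] by auto
  then show ?thesis using A assms lt by (auto simp: Dout_def)
qed

lemma half:
  assumes n: "0 < n" and T: "0 < T" and b: "\<forall>i<n. 0 \<le> b i \<and> b i \<le> 1"
    and Z: "\<forall>t<T. \<forall>i<n. z' $ (off+(t*n+i)) = Dout n b (\<lambda>j. z $ (off+j)) t i"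
    and S: "\<forall>t<T. (\<Sum>i<n. z $ (off+(t*n+i))) = 0"
  shows "\<forall>t<T. (\<Sum>i<n. z' $ (off+(t*n+i))) = 0"
    and "blocknorm T n off z' \<le> blocknorm T n off z"
    and "(\<forall>i<n. b i = \<beta>) \<Longrightarrow> 0 \<le> \<beta> \<Longrightarrow> \<beta> < 1 \<Longrightarrow> 0 < blocknorm T n off z \<Longrightarrow>
         blocknorm T n off z' < blocknorm T n off z"
proof -
  define y where "y = (\<lambda>j. z $ (off+j))"
  define M where "M = blocknorm T n off z"
  have Sy: "\<forall>t<T. (\<Sum>i<n. y (t*n+i)) = 0" using S by (simp add: y_def)
  have Ny: "\<forall>t<T. (\<Sum>i<n. \<bar>y (t*n+i)\<bar>) \<le> M" using blocknorm_ge by (simp add: y_def M_def)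
  have "(\<Sum>i<n. \<bar>y (0*n+i)\<bar>) \<le> M" using Ny T by blast
  then have N0: "(\<Sum>i<n. \<bar>y i\<bar>) \<le> M" by simp
  have "(\<Sum>i<n. y (0*n+i)) = 0" using Sy T by blast
  then have S0: "(\<Sum>i<n. y i) = 0" by simp
  have a: "(\<Sum>i<n. \<bar>Af n b y i\<bar>) \<le> (\<Sum>i<n. \<bar>y i\<bar>)" by (rule Af_abs[OF n b])
  have Zy: "\<forall>t<T. \<forall>i<n. z' $ (off+(t*n+i)) = Dout n b y t i" using Z by (simp add: y_def)
  show "\<forall>t<T. (\<Sum>i<n. z' $ (off+(t*n+i))) = 0"
  proof (intro allI impI)
    fix t assume t: "t < T"
    have "(\<Sum>i<n. z' $ (off+(t*n+i))) = (\<Sum>i<n. Dout n b y t i)" using Zy t by simp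
    also have "\<dots> = 0" by (rule Dout_sum[OF n t Sy])
    finally show "(\<Sum>i<n. z' $ (off+(t*n+i))) = 0" .
  qed
  show "blocknorm T n off z' \<le> blocknorm T n off z"
    unfolding blocknorm_le_iff[OF T]
  proof (intro allI impI)
    fix t assume t: "t < T"
    have "(\<Sum>i<n. \<bar>z' $ (off+(t*n+i))\<bar>) = (\<Sum>i<n. \<bar>Dout n b y t i\<bar>)" using Zy t by simp
    also have "\<dots> \<le> M" by (rule Dout_norm(1)[OF t Ny a N0])
    finally show "(\<Sum>i<n. \<bar>z' $ (off+(t*n+i))\<bar>) \<le> blocknorm T n off z" by (simp add: M_def)
  qed
  assume bb: "\<forall>i<n. b i = \<beta>" and be: "0 \<le> \<beta>" "\<beta> < 1" and Mp: "0 < blocknorm T n off z"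
  have "\<And>i. i < n \<Longrightarrow> Af n b y i = \<beta> * y i"
    using Af_cong2[of n b "\<lambda>_. \<beta>" y y] bb Af_const[OF S0] by auto
  then have "(\<Sum>i<n. \<bar>Af n b y i\<bar>) = (\<Sum>i<n. \<beta> * \<bar>y i\<bar>)" using be by (intro sum.cong) (auto simp: abs_mult)
  also have "\<dots> = \<beta> * (\<Sum>i<n. \<bar>y i\<bar>)" by (simp add: sum_distrib_left)
  finally have a2: "(\<Sum>i<n. \<bar>Af n b y i\<bar>) \<le> \<beta> * M" using N0 be by (simp add: mult_left_mono)
  have bM: "\<beta> * M < M" using be Mp by (simp add: M_def)
  have bM': "\<beta> * M \<le> M" using bM by simp
  show "blocknorm T n off z' < blocknorm T n off z"
    unfolding blocknorm_less_iff[OF T]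
  proof (intro allI impI)
    fix t assume t: "t < T"
    have "(\<Sum>i<n. \<bar>z' $ (off+(t*n+i))\<bar>) = (\<Sum>i<n. \<bar>Dout n b y t i\<bar>)" using Zy t by simp
    also have "\<dots> < M" by (rule Dout_norm(2)[OF t Ny a2 bM' bM])
    finally show "(\<Sum>i<n. \<bar>z' $ (off+(t*n+i))\<bar>) < blocknorm T n off z" by (simp add: M_def)
  qed
qed

lemma Wset_iff: "z \<in> Wset T n \<longleftrightarrow> z \<in> carrier_vec (2*T*n) \<and>
   (\<forall>t<T. (\<Sum>i<n. z $ (0 + (t*n+i))) = 0) \<and> (\<forall>t<T. (\<Sum>i<n. z $ (T*n + (t*n+i))) = 0)"
  unfolding Wset_def by (auto simp: add.assoc)

lemma step1:
  assumes n: "0 < n" and T: "0 < T" and b: "\<forall>i<n. 0 \<le> b i \<and> b i \<le> 1"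
    and z: "z \<in> Wset T n"
  defines "z' \<equiv> blk1 T n (Dmat T n (Amat n b)) *\<^sub>v z"
  shows "z' \<in> Wset T n" and "blocknorm T n 0 z' \<le> blocknorm T n 0 z"
    and "blocknorm T n (T*n) z' = blocknorm T n (T*n) z"
    and "(\<forall>i<n. b i = \<beta>) \<Longrightarrow> 0 \<le> \<beta> \<Longrightarrow> \<beta> < 1 \<Longrightarrow> 0 < blocknorm T n 0 z \<Longrightarrow>
         blocknorm T n 0 z' < blocknorm T n 0 z"
proof -
  have zc: "z \<in> carrier_vec (2*T*n)" using z by (simp add: Wset_iff)
  have D: "Dmat T n (Amat n b) \<in> carrier_mat (T*n) (T*n)" by (rule Dmat_carrier)
  have z'c: "z' \<in> carrier_vec (2*T*n)" unfolding z'_def by (rule mult_mat_vec_carrier[OF blk1_carrier[OF D] zc])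
  have vc: "vec (T*n) (\<lambda>j. z $ j) \<in> carrier_vec (T*n)" by simp
  have Z1: "\<forall>t<T. \<forall>i<n. z' $ (0+(t*n+i)) = Dout n b (\<lambda>j. z $ (0+j)) t i"
  proof (intro allI impI)
    fix t i assume t: "t < T" and i: "i < n"
    have r: "t*n+i < T*n" by (rule idx_lt[OF t i])
    then have r2: "t*n+i < 2*T*n" by simp
    have "z' $ (t*n+i) = (Dmat T n (Amat n b) *\<^sub>v vec (T*n) (\<lambda>j. z $ j)) $ (t*n+i)"
      unfolding z'_def using blk1_apply[OF D zc r2] r by simp
    also have "\<dots> = Dout n b (\<lambda>j. vec (T*n) (\<lambda>j. z $ j) $ j) t i"
      using Dmat_apply[OF vc r] i by simp
    also have "\<dots> = Dout n b (\<lambda>j. z $ (0+j)) t i" by (rule Dout_cong) (use t i in auto)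
    finally show "z' $ (0+(t*n+i)) = Dout n b (\<lambda>j. z $ (0+j)) t i" by simp
  qed
  have Z2: "\<forall>t<T. \<forall>i<n. z' $ (T*n+(t*n+i)) = z $ (T*n+(t*n+i))"
  proof (intro allI impI)
    fix t i assume t: "t < T" and i: "i < n"
    have r: "t*n+i < T*n" by (rule idx_lt[OF t i])
    then have r2: "T*n + (t*n+i) < 2*T*n" by simp
    show "z' $ (T*n+(t*n+i)) = z $ (T*n+(t*n+i))"
      unfolding z'_def using blk1_apply[OF D zc r2] by simp
  qed
  have S0: "\<forall>t<T. (\<Sum>i<n. z $ (0 + (t*n+i))) = 0" and SN: "\<forall>t<T. (\<Sum>i<n. z $ (T*n + (t*n+i))) = 0"
    using z unfolding Wset_iff by auto
  note H = half[OF n T b Z1 S0]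
  have SN': "\<forall>t<T. (\<Sum>i<n. z' $ (T*n + (t*n+i))) = 0" using SN Z2 by simp
  show "z' \<in> Wset T n" unfolding Wset_iff using z'c H(1) SN' by blast
  show "blocknorm T n 0 z' \<le> blocknorm T n 0 z" by (rule H(2))
  show "blocknorm T n (T*n) z' = blocknorm T n (T*n) z" unfolding blocknorm_eq
    using Z2 by (intro arg_cong[where f=Max] image_cong) auto
  show "(\<forall>i<n. b i = \<beta>) \<Longrightarrow> 0 \<le> \<beta> \<Longrightarrow> \<beta> < 1 \<Longrightarrow> 0 < blocknorm T n 0 z \<Longrightarrow>
         blocknorm T n 0 z' < blocknorm T n 0 z" by (rule H(3))
qed

lemma step2:
  assumes n: "0 < n" and T: "0 < T" and b: "\<forall>i<n. 0 \<le> b i \<and> b i \<le> 1"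
    and z: "z \<in> Wset T n"
  defines "z' \<equiv> blk2 T n (Dmat T n (Amat n b)) *\<^sub>v z"
  shows "z' \<in> Wset T n" and "blocknorm T n (T*n) z' \<le> blocknorm T n (T*n) z"
    and "blocknorm T n 0 z' = blocknorm T n 0 z"
    and "(\<forall>i<n. b i = \<beta>) \<Longrightarrow> 0 \<le> \<beta> \<Longrightarrow> \<beta> < 1 \<Longrightarrow> 0 < blocknorm T n (T*n) z \<Longrightarrow>
         blocknorm T n (T*n) z' < blocknorm T n (T*n) z"
proof -
  have zc: "z \<in> carrier_vec (2*T*n)" using z by (simp add: Wset_iff)
  have D: "Dmat T n (Amat n b) \<in> carrier_mat (T*n) (T*n)" by (rule Dmat_carrier)
  have z'c: "z' \<in> carrier_vec (2*T*n)" unfolding z'_def by (rule mult_mat_vec_carrier[OF blk2_carrier[OF D] zc])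
  have vc: "vec (T*n) (\<lambda>j. z $ (T*n+j)) \<in> carrier_vec (T*n)" by simp
  have Z1: "\<forall>t<T. \<forall>i<n. z' $ (T*n+(t*n+i)) = Dout n b (\<lambda>j. z $ (T*n+j)) t i"
  proof (intro allI impI)
    fix t i assume t: "t < T" and i: "i < n"
    have r: "t*n+i < T*n" by (rule idx_lt[OF t i])
    then have r2: "T*n+(t*n+i) < 2*T*n" by simp
    have "z' $ (T*n+(t*n+i)) = (Dmat T n (Amat n b) *\<^sub>v vec (T*n) (\<lambda>j. z $ (T*n+j))) $ (t*n+i)"
      unfolding z'_def using blk2_apply[OF D zc r2] r by simp
    also have "\<dots> = Dout n b (\<lambda>j. vec (T*n) (\<lambda>j. z $ (T*n+j)) $ j) t i"
      using Dmat_apply[OF vc r] i by simp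
    also have "\<dots> = Dout n b (\<lambda>j. z $ (T*n+j)) t i" by (rule Dout_cong) (use t i in auto)
    finally show "z' $ (T*n+(t*n+i)) = Dout n b (\<lambda>j. z $ (T*n+j)) t i" .
  qed
  have Z2: "\<forall>t<T. \<forall>i<n. z' $ (0+(t*n+i)) = z $ (0+(t*n+i))"
  proof (intro allI impI)
    fix t i assume t: "t < T" and i: "i < n"
    have r: "t*n+i < T*n" by (rule idx_lt[OF t i])
    then have r2: "t*n+i < 2*T*n" by simp
    show "z' $ (0+(t*n+i)) = z $ (0+(t*n+i))"
      unfolding z'_def using blk2_apply[OF D zc r2] r by simp
  qed
  have S0: "\<forall>t<T. (\<Sum>i<n. z $ (0 + (t*n+i))) = 0" and SN: "\<forall>t<T. (\<Sum>i<n. z $ (T*n + (t*n+i))) = 0"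
    using z unfolding Wset_iff by auto
  note H = half[OF n T b Z1 SN]
  have S0': "\<forall>t<T. (\<Sum>i<n. z' $ (0 + (t*n+i))) = 0" using S0 Z2 by simp
  show "z' \<in> Wset T n" unfolding Wset_iff using z'c H(1) S0' by blast
  show "blocknorm T n (T*n) z' \<le> blocknorm T n (T*n) z" by (rule H(2))
  show "blocknorm T n 0 z' = blocknorm T n 0 z" unfolding blocknorm_eq
    using Z2 by (intro arg_cong[where f=Max] image_cong) auto
  show "(\<forall>i<n. b i = \<beta>) \<Longrightarrow> 0 \<le> \<beta> \<Longrightarrow> \<beta> < 1 \<Longrightarrow> 0 < blocknorm T n (T*n) z \<Longrightarrow>
         blocknorm T n (T*n) z' < blocknorm T n (T*n) z" by (rule H(3))
qed

lemma Fam_good: assumes "A \<in> Fam n \<beta>" "0 < \<beta>" "\<beta> < 1"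
  shows "\<exists>b. A = Amat n b \<and> (\<forall>i<n. 0 \<le> b i \<and> b i \<le> 1)"
  using assms unfolding Fam_def by force

lemma Emat_eq: "Emat T n \<beta> = Dmat T n (Amat n (\<lambda>_. \<beta>))"
  unfolding Emat_def Bmat_def Amat_def by simp

locale ctxL =
  fixes n T :: nat and \<beta>1 \<beta>2 :: real
  assumes n: "0 < n" and T: "0 < T" and b1: "0 < \<beta>1" "\<beta>1 < 1" and b2: "0 < \<beta>2" "\<beta>2 < 1"
begin

abbreviation c0 where "c0 z \<equiv> blocknorm T n 0 z"
abbreviation cN where "cN z \<equiv> blocknorm T n (T*n) z"

lemma S_step: assumes U: "U \<in> Sset T n \<beta>1 \<beta>2" and z: "z \<in> Wset T n"
  shows "U \<in> carrier_mat (2*T*n) (2*T*n) \<and> U *\<^sub>v z \<in> Wset T n \<and> c0 (U *\<^sub>v z) \<le> c0 z \<and> cN (U *\<^sub>v z) \<le> cN z"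
proof -
  from U consider (one) A where "U = blk1 T n (Dmat T n A)" "A \<in> Fam n \<beta>1"
    | (two) A where "U = blk2 T n (Dmat T n A)" "A \<in> Fam n \<beta>2"
    unfolding Sset_def by blast
  then show ?thesis
  proof cases
    case one
    then obtain b where b: "A = Amat n b" "\<forall>i<n. 0 \<le> b i \<and> b i \<le> 1" using Fam_good b1 by blast
    note st = step1[OF n T b(2) z]
    show ?thesis using one b st(1,2,3) blk1_carrier[OF Dmat_carrier] by simp
  next
    case two
    then obtain b where b: "A = Amat n b" "\<forall>i<n. 0 \<le> b i \<and> b i \<le> 1" using Fam_good b2 by blast
    note st = step2[OF n T b(2) z]
    show ?thesis using two b st(1,2,3) blk2_carrier[OF Dmat_carrier] by simp
  qed
qed

lemma E1_step: assumes z: "z \<in> Wset T n" and p: "0 < c0 z"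
  shows "c0 (blk1 T n (Emat T n \<beta>1) *\<^sub>v z) < c0 z"
proof -
  have b: "\<forall>i<n. 0 \<le> (\<lambda>_. \<beta>1) i \<and> (\<lambda>_. \<beta>1) i \<le> (1::real)" using b1 by auto
  show ?thesis unfolding Emat_eq using step1(4)[OF n T b z, of \<beta>1] b1 p by simp
qed

lemma E2_step: assumes z: "z \<in> Wset T n" and p: "0 < cN z"
  shows "cN (blk2 T n (Emat T n \<beta>2) *\<^sub>v z) < cN z"
proof -
  have b: "\<forall>i<n. 0 \<le> (\<lambda>_. \<beta>2) i \<and> (\<lambda>_. \<beta>2) i \<le> (1::real)" using b2 by auto
  show ?thesis unfolding Emat_eq using step2(4)[OF n T b z, of \<beta>2] b2 p by simp
qed

lemma fold_inv: assumes "set Us \<subseteq> Sset T n \<beta>1 \<beta>2" "z \<in> Wset T n"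
  shows "fold (\<lambda>U v. U *\<^sub>v v) Us z \<in> Wset T n \<and> c0 (fold (\<lambda>U v. U *\<^sub>v v) Us z) \<le> c0 z
     \<and> cN (fold (\<lambda>U v. U *\<^sub>v v) Us z) \<le> cN z"
  using assms
proof (induction Us arbitrary: z)
  case (Cons U Us)
  have s: "U *\<^sub>v z \<in> Wset T n \<and> c0 (U *\<^sub>v z) \<le> c0 z \<and> cN (U *\<^sub>v z) \<le> cN z"
    using S_step Cons.prems by auto
  then have "fold (\<lambda>U v. U *\<^sub>v v) Us (U *\<^sub>v z) \<in> Wset T n \<and> c0 (fold (\<lambda>U v. U *\<^sub>v v) Us (U *\<^sub>v z)) \<le> c0 (U *\<^sub>v z)
     \<and> cN (fold (\<lambda>U v. U *\<^sub>v v) Us (U *\<^sub>v z)) \<le> cN (U *\<^sub>v z)" using Cons by auto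
  then show ?case using s by auto
qed simp

lemma fold_strict1: assumes "set Us \<subseteq> Sset T n \<beta>1 \<beta>2" "blk1 T n (Emat T n \<beta>1) \<in> set Us" "z \<in> Wset T n" "0 < c0 z"
  shows "c0 (fold (\<lambda>U v. U *\<^sub>v v) Us z) < c0 z"
  using assms
proof (induction Us arbitrary: z)
  case (Cons U Us)
  have s: "U *\<^sub>v z \<in> Wset T n \<and> c0 (U *\<^sub>v z) \<le> c0 z"
    using S_step Cons.prems by auto
  have fi: "c0 (fold (\<lambda>U v. U *\<^sub>v v) Us (U *\<^sub>v z)) \<le> c0 (U *\<^sub>v z)"
    using fold_inv[of Us "U *\<^sub>v z"] s Cons.prems by auto
  show ?case
  proof (cases "U = blk1 T n (Emat T n \<beta>1)")
    case True
    then show ?thesis using E1_step[OF Cons.prems(3,4)] fi by simp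
  next
    case False
    then have inUs: "blk1 T n (Emat T n \<beta>1) \<in> set Us" using Cons.prems by simp
    show ?thesis
    proof (cases "0 < c0 (U *\<^sub>v z)")
      case True
      then show ?thesis using Cons.IH[OF _ inUs] s Cons.prems by fastforce
    next
      case False
      then show ?thesis using fi Cons.prems by simp
    qed
  qed
qed simp

lemma fold_strict2: assumes "set Us \<subseteq> Sset T n \<beta>1 \<beta>2" "blk2 T n (Emat T n \<beta>2) \<in> set Us" "z \<in> Wset T n" "0 < cN z"
  shows "cN (fold (\<lambda>U v. U *\<^sub>v v) Us z) < cN z"
  using assms
proof (induction Us arbitrary: z)
  case (Cons U Us)
  have s: "U *\<^sub>v z \<in> Wset T n \<and> cN (U *\<^sub>v z) \<le> cN z"
    using S_step Cons.prems by auto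
  have fi: "cN (fold (\<lambda>U v. U *\<^sub>v v) Us (U *\<^sub>v z)) \<le> cN (U *\<^sub>v z)"
    using fold_inv[of Us "U *\<^sub>v z"] s Cons.prems by auto
  show ?case
  proof (cases "U = blk2 T n (Emat T n \<beta>2)")
    case True
    then show ?thesis using E2_step[OF Cons.prems(3,4)] fi by simp
  next
    case False
    then have inUs: "blk2 T n (Emat T n \<beta>2) \<in> set Us" using Cons.prems by simp
    show ?thesis
    proof (cases "0 < cN (U *\<^sub>v z)")
      case True
      then show ?thesis using Cons.IH[OF _ inUs] s Cons.prems by fastforce
    next
      case False
      then show ?thesis using fi Cons.prems by simp
    qed
  qed
qed simp

end

lemma lprod_fold: assumes "set Us \<subseteq> carrier_mat N N" "Acc \<in> carrier_mat N N" "z \<in> carrier_vec N"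
  shows "fold (\<lambda>U acc. U * acc) Us Acc *\<^sub>v z = fold (\<lambda>U v. U *\<^sub>v v) Us (Acc *\<^sub>v z)"
  using assms
proof (induction Us arbitrary: Acc)
  case (Cons U Us)
  have U: "U \<in> carrier_mat N N" using Cons.prems by auto
  have "fold (\<lambda>U acc. U * acc) (U # Us) Acc *\<^sub>v z = fold (\<lambda>U acc. U * acc) Us (U * Acc) *\<^sub>v z" by simp
  also have "\<dots> = fold (\<lambda>U v. U *\<^sub>v v) Us ((U * Acc) *\<^sub>v z)"
    using Cons.IH[of "U * Acc"] Cons.prems U by auto
  also have "(U * Acc) *\<^sub>v z = U *\<^sub>v (Acc *\<^sub>v z)" using U Cons.prems by (intro assoc_mult_mat_vec) auto
  finally show ?case by simp
qed simp

lemma nonzero_pos: assumes n: "0 < n" and T: "0 < T" and z: "z \<in> carrier_vec (2*T*n)" and nz: "z \<noteq> 0\<^sub>v (2*T*n)"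
  shows "0 < blocknorm T n 0 z \<or> 0 < blocknorm T n (T*n) z"
proof -
  obtain r where r: "r < 2*T*n" "z $ r \<noteq> 0"
  proof (rule ccontr)
    assume "\<not> thesis"
    then have "\<forall>r<2*T*n. z $ r = 0" using that by blast
    then have "z = 0\<^sub>v (2*T*n)" using z by (intro eq_vecI) auto
    then show False using nz by simp
  qed
  have key: "\<And>off t i. t < T \<Longrightarrow> i < n \<Longrightarrow> z $ (off + (t*n+i)) \<noteq> 0 \<Longrightarrow> 0 < blocknorm T n off z"
  proof -
    fix off t i assume t: "t < T" and i: "i < n" and ne: "z $ (off + (t*n+i)) \<noteq> 0"
    have "\<bar>z $ (off + (t*n+i))\<bar> \<le> (\<Sum>i<n. \<bar>z $ (off + (t*n+i))\<bar>)"
      using i by (intro member_le_sum[where f="\<lambda>i. \<bar>z $ (off + (t*n+i))\<bar>"]) auto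
    also have "\<dots> \<le> blocknorm T n off z" by (rule blocknorm_ge[OF t])
    finally show "0 < blocknorm T n off z" using ne by simp
  qed
  show ?thesis
  proof (cases "r < T*n")
    case True
    have t: "r div n < T" using True by (simp add: less_mult_imp_div_less)
    have i: "r mod n < n" using n by simp
    have "z $ (0 + (r div n * n + r mod n)) \<noteq> 0" using r(2) by simp
    then show ?thesis using key[OF t i] by blast
  next
    case False
    define r' where "r' = r - T*n"
    have r': "r' < T*n" using r(1) False by (simp add: r'_def)
    have t: "r' div n < T" using r' by (simp add: less_mult_imp_div_less)
    have i: "r' mod n < n" using n by simp
    have "z $ (T*n + (r' div n * n + r' mod n)) \<noteq> 0" using r(2) False by (simp add: r'_def)
    then show ?thesis using key[OF t i] by blast
  qed
qed

theorem lemma5: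
  fixes n T :: nat and \<beta>1 \<beta>2 :: real
  assumes "n \<ge> 1" and "T \<ge> 1"
    and "0 < \<beta>1" and "\<beta>1 < 1" and "0 < \<beta>2" and "\<beta>2 < 1"
  shows "(\<forall>H \<in> Vset T n \<beta>1 \<beta>2. \<forall>z \<in> Wset T n. H *\<^sub>v z \<in> Wset T n) \<and>
      (\<forall>H \<in> Vset T n \<beta>1 \<beta>2. \<forall>z \<in> Wset T n. znorm T n (H *\<^sub>v z) \<le> znorm T n z) \<and>
      (\<forall>Us. Us \<noteq> [] \<and> set Us \<subseteq> Sset T n \<beta>1 \<beta>2
            \<and> blk1 T n (Emat T n \<beta>1) \<in> set Us \<and> blk2 T n (Emat T n \<beta>2) \<in> set Us
            \<longrightarrow> (\<forall>z \<in> Wset T n. z \<noteq> 0\<^sub>v (2*T*n)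
                   \<longrightarrow> znorm T n (lprod (2*T*n) Us *\<^sub>v z) < znorm T n z))"
proof -
  have n: "0 < n" and T: "0 < T" using assms by auto
  interpret L: ctxL n T \<beta>1 \<beta>2 using assms by unfold_locales auto
  have app: "lprod (2*T*n) Us *\<^sub>v z = fold (\<lambda>U v. U *\<^sub>v v) Us z"
    if "set Us \<subseteq> Sset T n \<beta>1 \<beta>2" "z \<in> Wset T n" for Us z
  proof -
    have "set Us \<subseteq> carrier_mat (2*T*n) (2*T*n)" using that L.S_step by blast
    moreover have "z \<in> carrier_vec (2*T*n)" using that(2) by (simp add: Wset_def)
    ultimately show ?thesis unfolding lprod_def using lprod_fold[of Us "2*T*n" "1\<^sub>m (2*T*n)" z] by simp
  qed
  have inv: "lprod (2*T*n) Us *\<^sub>v z \<in> Wset T n \<and> znorm T n (lprod (2*T*n) Us *\<^sub>v z) \<le> znorm T n z"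
    if "set Us \<subseteq> Sset T n \<beta>1 \<beta>2" "z \<in> Wset T n" for Us z
    using L.fold_inv[OF that] app[OF that] unfolding znorm_def by auto
  have p1: "\<forall>H \<in> Vset T n \<beta>1 \<beta>2. \<forall>z \<in> Wset T n. H *\<^sub>v z \<in> Wset T n"
    using inv unfolding Vset_def by blast
  have p2: "\<forall>H \<in> Vset T n \<beta>1 \<beta>2. \<forall>z \<in> Wset T n. znorm T n (H *\<^sub>v z) \<le> znorm T n z"
    using inv unfolding Vset_def by blast
  have p3: "znorm T n (lprod (2*T*n) Us *\<^sub>v z) < znorm T n z"
    if U: "set Us \<subseteq> Sset T n \<beta>1 \<beta>2" "blk1 T n (Emat T n \<beta>1) \<in> set Us" "blk2 T n (Emat T n \<beta>2) \<in> set Us"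
      and z: "z \<in> Wset T n" "z \<noteq> 0\<^sub>v (2*T*n)" for Us z
  proof -
    let ?f = "fold (\<lambda>U v. U *\<^sub>v v) Us z"
    have zc: "z \<in> carrier_vec (2*T*n)" using z by (simp add: Wset_def)
    have le: "blocknorm T n 0 ?f \<le> blocknorm T n 0 z" "blocknorm T n (T*n) ?f \<le> blocknorm T n (T*n) z"
      using L.fold_inv[OF U(1) z(1)] by auto
    have s1: "0 < blocknorm T n 0 z \<Longrightarrow> blocknorm T n 0 ?f < blocknorm T n 0 z"
      using L.fold_strict1[OF U(1,2) z(1)] by blast
    have s2: "0 < blocknorm T n (T*n) z \<Longrightarrow> blocknorm T n (T*n) ?f < blocknorm T n (T*n) z"
      using L.fold_strict2[OF U(1,3) z(1)] by blast
    have nn: "0 \<le> blocknorm T n 0 ?f" "0 \<le> blocknorm T n (T*n) ?f" using blocknorm_nonneg[OF T] by auto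
    have pos: "0 < blocknorm T n 0 z \<or> 0 < blocknorm T n (T*n) z" by (rule nonzero_pos[OF n T zc z(2)])
    have "znorm T n ?f < znorm T n z"
      unfolding znorm_def using le s1 s2 nn pos by (auto simp: max_def)
    then show ?thesis using app[OF U(1) z(1)] by simp
  qed
  show ?thesis using p1 p2 p3 by blast
qed

end
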